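(* (i) Let $G=(V,E,w)$ be a weighted graph with $n=|V|\ge 3$ vertices and symmetric nonnegative weights. Then $\rho^*_G\in[1,n-2]$. (ii) Let $G=(V,E)$ be a connected unweighted graph with $n=|V|$ and $m=|E|$. Then $\rho^*_G\in\left[1,\frac{n^2-2n}{2m-n}\right]$.
   Context: Let $V=\{v_1,\dots,v_n\}$; weights are given by a symmetric nonnegative matrix with $w_{ij}=0$ when $(v_i,v_j)\notin E$. An unweighted graph has all edge weights equal to $1$. An HC-tree for $V$ is a rooted tree with leaf set $V$; LCA denotes lowest common ancestor. For distinct $i,j,k$: relation $\{i,j|k\}$ holds in $T$ if $\mathrm{LCA}(v_i,v_j)$ is a proper descendant of $\mathrm{LCA}(v_i,v_j,v_k)$; $\{i|j|k\}$ holds if $\mathrm{LCA}(v_i,v_j)=\mathrm{LCA}(v_j,v_k)=\mathrm{LCA}(v_i,v_j,v_k)$. The triplet cost $c_T(i,j,k)$ is $w_{ik}+w_{jk}$ if $\{i,j|k\}$ holds, $w_{ij}+w_{jk}$ if $\{i,k|j\}$, $w_{ij}+w_{ik}$ if $\{j,k|i\}$, and $w_{ij}+w_{jk}+w_{ik}$ if $\{i|j|k\}$. $\mathrm{TC}_G(T)=\sum c_T(i,j,k)$ over unordered triples of distinct indices; base cost $\mathrm{BC}(G)=\sum\min\{w_{ij}+w_{ik},w_{ij}+w_{jk},w_{ik}+w_{jk}\}$ over the same triples. The ratio-cost is $\rho_G(T)=\mathrm{TC}_G(T)/\mathrm{BC}(G)$ with conventions $0/0=1$ and $x/0=+\infty$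 for $x>0$, and $\rho^*_G=\min_T\rho_G(T)$ over all HC-trees $T$ for $V$. *)

theory Defs
  imports Complex_Main "HOL-Library.Sublist" "HOL-Library.Extended_Real"
begin

text \<open>Vertices are v_0,...,v_{n-1}, identified with the naturals below n.
  HC-trees: rooted (ordered) trees; internal nodes have a nonempty list of children,
  leaves carry a vertex label.\<close>

datatype htree = Lf nat | Nd "htree list"

fun lvs :: "htree \<Rightarrow> nat list" where
  "lvs (Lf v) = [v]"
| "lvs (Nd ts) = concat (map lvs ts)"

fun wf_ht :: "htree \<Rightarrow> bool" where
  "wf_ht (Lf v) = True"
| "wf_ht (Nd ts) = (ts \<noteq> [] \<and> (\<forall>t\<in>set ts. wf_ht t))"

definition hc_tree :: "nat \<Rightarrow> htree \<Rightarrow> bool" where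
  "hc_tree n T \<longleftrightarrow> wf_ht T \<and> distinct (lvs T) \<and> set (lvs T) = {..<n}"

text \<open>Nodes are addressed by positions (paths of child indices from the root).\<close>
primrec subtree_at :: "htree \<Rightarrow> nat list \<Rightarrow> htree option" where
  "subtree_at t [] = Some t"
| "subtree_at t (i # p) = (case t of Lf _ \<Rightarrow> None
                   | Nd ts \<Rightarrow> if i < length ts then subtree_at (ts ! i) p else None)"

definition pos :: "htree \<Rightarrow> nat list set" where
  "pos t = {p. subtree_at t p \<noteq> None}"

definition cl :: "htree \<Rightarrow> nat list \<Rightarrow> nat set" where
  "cl t p = set (lvs (the (subtree_at t p)))"

text \<open>Ancestor = prefix of positions. LCA of a set S of leaves: the common ancestor
  that is a descendant of every common ancestor.\<close>
definition lca :: "htree \<Rightarrow> nat set \<Rightarrow> nat list" where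
  "lca t S = (THE p. p \<in> pos t \<and> S \<subseteq> cl t p \<and>
                     (\<forall>q\<in>pos t. S \<subseteq> cl t q \<longrightarrow> prefix q p))"

definition rel2 :: "htree \<Rightarrow> nat \<Rightarrow> nat \<Rightarrow> nat \<Rightarrow> bool" where
  "rel2 t i j k \<longleftrightarrow> strict_prefix (lca t {i,j,k}) (lca t {i,j})"

definition rel3 :: "htree \<Rightarrow> nat \<Rightarrow> nat \<Rightarrow> nat \<Rightarrow> bool" where
  "rel3 t i j k \<longleftrightarrow> lca t {i,j} = lca t {j,k} \<and> lca t {j,k} = lca t {i,j,k}"

definition tcost :: "(nat \<Rightarrow> nat \<Rightarrow> real) \<Rightarrow> htree \<Rightarrow> nat \<Rightarrow> nat \<Rightarrow> nat \<Rightarrow> real" where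
  "tcost w t i j k =
     (if rel2 t i j k then w i k + w j k
      else if rel2 t i k j then w i j + w j k
      else if rel2 t j k i then w i j + w i k
      else if rel3 t i j k then w i j + w j k + w i k
      else 0)"

definition triples :: "nat \<Rightarrow> (nat \<times> nat \<times> nat) set" where
  "triples n = {(i,j,k). i < j \<and> j < k \<and> k < n}"

definition TC :: "nat \<Rightarrow> (nat \<Rightarrow> nat \<Rightarrow> real) \<Rightarrow> htree \<Rightarrow> real" where
  "TC n w t = (\<Sum>(i,j,k)\<in>triples n. tcost w t i j k)"

definition BC :: "nat \<Rightarrow> (nat \<Rightarrow> nat \<Rightarrow> real) \<Rightarrow> real" where
  "BC n w = (\<Sum>(i,j,k)\<in>triples n.
      min (w i j + w i k) (min (w i j + w j k) (w i k + w j k)))"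

text \<open>Ratio cost with 0/0 = 1 and x/0 = +\<infinity> for x > 0.\<close>
definition ratio :: "nat \<Rightarrow> (nat \<Rightarrow> nat \<Rightarrow> real) \<Rightarrow> htree \<Rightarrow> ereal" where
  "ratio n w t = (if BC n w = 0 then (if TC n w t = 0 then 1 else \<infinity>)
                  else ereal (TC n w t / BC n w))"

definition rho_star :: "nat \<Rightarrow> (nat \<Rightarrow> nat \<Rightarrow> real) \<Rightarrow> ereal" where
  "rho_star n w = Inf (ratio n w ` {T. hc_tree n T})"

definition simple_graph :: "nat \<Rightarrow> nat set set \<Rightarrow> bool" where
  "simple_graph n E \<longleftrightarrow> (\<forall>e\<in>E. \<exists>i j. e = {i,j} \<and> i \<noteq> j \<and> i < n \<and> j < n)"

definition connected_graph :: "nat \<Rightarrow> nat set set \<Rightarrow> bool" where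
  "connected_graph n E \<longleftrightarrow>
     (\<forall>i<n. \<forall>j<n. (i, j) \<in> {(a, b). {a, b} \<in> E}\<^sup>*)"

definition unw :: "nat set set \<Rightarrow> nat \<Rightarrow> nat \<Rightarrow> real" where
  "unw E i j = (if {i,j} \<in> E then 1 else 0)"

end

theory Submission
  imports Defs
begin

lemma distinct_concat_nth_disj:
  "distinct (concat xss) \<Longrightarrow> c < length xss \<Longrightarrow> d < length xss \<Longrightarrow> c \<noteq> d
   \<Longrightarrow> set (xss!c) \<inter> set (xss!d) = {}"
proof (induction xss arbitrary: c d)
  case Nil then show ?case by simp
next
  case (Cons xs xss)
  show ?case
  proof (cases c)
    case 0
    then obtain d' where "d = Suc d'" using Cons by (cases d) auto
    then show ?thesis using Cons 0 nth_mem[of d' xss] by (simp add: disjoint_iff)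
  next
    case (Suc c')
    show ?thesis
    proof (cases d)
      case 0 then show ?thesis using Cons Suc by (simp add: disjoint_iff) (metis nth_mem)
    next
      case (Suc d') then show ?thesis using Cons \<open>c = Suc c'\<close> by auto
    qed
  qed
qed

lemma distinct_concat_nth:
  "distinct (concat xss) \<Longrightarrow> c < length xss \<Longrightarrow> distinct (xss!c)"
  by (simp add: distinct_concat_iff)

lemma pos_Lf[simp]: "pos (Lf v) = {[]}"
proof -
  have "subtree_at (Lf v) p \<noteq> None \<longleftrightarrow> p = []" for p by (cases p) auto
  then show ?thesis unfolding pos_def by auto
qed

lemma mem_pos_Nd:
  "p \<in> pos (Nd ts) \<longleftrightarrow> p = [] \<or> (\<exists>c q. p = c#q \<and> c < length ts \<and> q \<in> pos (ts!c))"
  unfolding pos_def by (cases p) auto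

lemma Nil_pos[simp]: "[] \<in> pos t" unfolding pos_def by simp

lemma cl_Nil[simp]: "cl t [] = set (lvs t)" unfolding cl_def by simp

lemma cl_Nd_Cons: "c < length ts \<Longrightarrow> cl (Nd ts) (c#q) = cl (ts!c) q"
  unfolding cl_def by simp

lemma cl_subset: "p \<in> pos t \<Longrightarrow> cl t p \<subseteq> set (lvs t)"
proof (induction t arbitrary: p)
  case (Lf v) then show ?case by simp
next
  case (Nd ts)
  show ?case
  proof (cases p)
    case Nil then show ?thesis by simp
  next
    case (Cons c q)
    then have c: "c < length ts" and q: "q \<in> pos (ts!c)" using Nd.prems mem_pos_Nd by auto
    have "cl (ts!c) q \<subseteq> set (lvs (ts!c))" using Nd.IH[OF nth_mem[OF c] q] .
    moreover have "set (lvs (ts!c)) \<subseteq> set (lvs (Nd ts))" using c by (auto dest!: nth_mem)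
    ultimately show ?thesis using Cons c cl_Nd_Cons by auto
  qed
qed

definition isLCA :: "htree \<Rightarrow> nat set \<Rightarrow> nat list \<Rightarrow> bool" where
  "isLCA t S p \<longleftrightarrow> p \<in> pos t \<and> S \<subseteq> cl t p \<and> (\<forall>q\<in>pos t. S \<subseteq> cl t q \<longrightarrow> prefix q p)"

lemma lca_eq: "isLCA t S p \<Longrightarrow> lca t S = p"
  unfolding lca_def
  apply (rule the_equality)
   apply (simp add: isLCA_def)
  by (metis isLCA_def prefix_order.antisym)

lemma isLCA_Nd_child:
  assumes d: "distinct (lvs (Nd ts))" and S: "S \<noteq> {}" and c: "c < length ts"
    and L: "isLCA (ts!c) S p"
  shows "isLCA (Nd ts) S (c#p)"
  unfolding isLCA_def
proof (intro conjI ballI impI)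
  show "c # p \<in> pos (Nd ts)" using L c mem_pos_Nd isLCA_def by auto
  show "S \<subseteq> cl (Nd ts) (c # p)" using L c cl_Nd_Cons isLCA_def by auto
  fix q assume q: "q \<in> pos (Nd ts)" and Sq: "S \<subseteq> cl (Nd ts) q"
  show "prefix q (c # p)"
  proof (cases q)
    case Nil then show ?thesis by simp
  next
    case (Cons d' q')
    then have d': "d' < length ts" and q': "q' \<in> pos (ts!d')" using q mem_pos_Nd by auto
    have Sq': "S \<subseteq> cl (ts!d') q'" using Sq Cons cl_Nd_Cons[OF d'] by simp
    have "S \<subseteq> set (lvs (ts!d'))" using Sq' cl_subset[OF q'] by auto
    moreover have "S \<subseteq> set (lvs (ts!c))" using L cl_subset isLCA_def by blast
    moreover have "distinct (concat (map lvs ts))" using d by simp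
    ultimately have "d' = c"
      using distinct_concat_nth_disj[of "map lvs ts" c d'] c d' S by auto
    then show ?thesis using L Cons q' Sq' isLCA_def by auto
  qed
qed

lemma isLCA_Nd_root:
  assumes "S \<subseteq> set (lvs (Nd ts))" and "\<forall>c<length ts. \<not> S \<subseteq> set (lvs (ts!c))"
  shows "isLCA (Nd ts) S []"
  unfolding isLCA_def
proof (intro conjI ballI impI)
  show "[] \<in> pos (Nd ts)" by simp
  show "S \<subseteq> cl (Nd ts) []" using assms by simp
  fix q assume q: "q \<in> pos (Nd ts)" and Sq: "S \<subseteq> cl (Nd ts) q"
  show "prefix q []"
  proof (cases q)
    case Nil then show ?thesis by simp
  next
    case (Cons d' q')
    then have d': "d' < length ts" and q': "q' \<in> pos (ts!d')" using q mem_pos_Nd by auto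
    have "S \<subseteq> set (lvs (ts!d'))" using Sq Cons cl_Nd_Cons[OF d'] cl_subset[OF q'] by auto
    then show ?thesis using assms(2) d' by auto
  qed
qed

lemma isLCA_Lf: "S \<subseteq> {v} \<Longrightarrow> isLCA (Lf v) S []"
  unfolding isLCA_def by auto

lemma lca_exists:
  "distinct (lvs t) \<Longrightarrow> S \<noteq> {} \<Longrightarrow> S \<subseteq> set (lvs t) \<Longrightarrow> \<exists>p. isLCA t S p"
proof (induction t)
  case (Lf v) then show ?case using isLCA_Lf by auto
next
  case (Nd ts)
  show ?case
  proof (cases "\<exists>c<length ts. S \<subseteq> set (lvs (ts!c))")
    case True
    then obtain c where c: "c < length ts" "S \<subseteq> set (lvs (ts!c))" by auto
    have "distinct (lvs (ts!c))" using Nd.prems(1) c(1)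
      using distinct_concat_nth[of "map lvs ts" c] by simp
    then obtain p where "isLCA (ts!c) S p" using Nd.IH[OF nth_mem[OF c(1)]] Nd.prems c by auto
    then show ?thesis using isLCA_Nd_child[OF Nd.prems(1,2) c(1)] by blast
  next
    case False
    then show ?thesis using isLCA_Nd_root[OF Nd.prems(3)] by blast
  qed
qed

lemma lca_isLCA:
  "distinct (lvs t) \<Longrightarrow> S \<noteq> {} \<Longrightarrow> S \<subseteq> set (lvs t) \<Longrightarrow> isLCA t S (lca t S)"
  using lca_exists lca_eq by blast

lemma lca_mono_prefix:
  assumes "distinct (lvs t)" "S \<noteq> {}" "S \<subseteq> S'" "S' \<subseteq> set (lvs t)"
  shows "prefix (lca t S') (lca t S)"
proof -
  have A: "isLCA t S' (lca t S')" using lca_isLCA assms by blast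
  have B: "isLCA t S (lca t S)" using lca_isLCA assms by blast
  show ?thesis using A B assms(3) unfolding isLCA_def by blast
qed

lemma tcost_ge_min:
  assumes d: "distinct (lvs T)" and ijk: "{i,j,k} \<subseteq> set (lvs T)"
    and nn: "0 \<le> w i j" "0 \<le> w i k" "0 \<le> w j k"
  shows "min (w i j + w i k) (min (w i j + w j k) (w i k + w j k)) \<le> tcost w T i j k"
proof -
  have p1: "prefix (lca T {i,j,k}) (lca T {i,j})"
    using lca_mono_prefix[OF d, of "{i,j}" "{i,j,k}"] ijk by auto
  have p2: "prefix (lca T {i,j,k}) (lca T {j,k})"
    using lca_mono_prefix[OF d, of "{j,k}" "{i,j,k}"] ijk by auto
  have e: "{j,k,i} = {i,j,k}" by auto
  show ?thesis
  proof (cases "rel2 T i j k \<or> rel2 T i k j \<or> rel2 T j k i")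
    case True then show ?thesis unfolding tcost_def by auto
  next
    case False
    then have "lca T {i,j} = lca T {i,j,k}" "lca T {j,k} = lca T {i,j,k}"
      using p1 p2 unfolding rel2_def e
      by (auto simp: strict_prefix_def)
    then have "rel3 T i j k" unfolding rel3_def by simp
    then show ?thesis using False nn unfolding tcost_def by auto
  qed
qed

lemma hc_tree_sub: "hc_tree n T \<Longrightarrow> (i,j,k) \<in> triples n \<Longrightarrow> {i,j,k} \<subseteq> set (lvs T)"
  unfolding hc_tree_def triples_def by auto

lemma BC_le_TC:
  assumes T: "hc_tree n T" and w: "\<forall>i<n. \<forall>j<n. w i j \<ge> 0"
  shows "BC n w \<le> TC n w T"
  unfolding BC_def TC_def
proof (rule sum_mono)
  fix x assume x: "x \<in> triples n"
  obtain i j k where xe: "x = (i,j,k)" by (cases x) auto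
  have "i < n" "j < n" "k < n" using x xe unfolding triples_def by auto
  then show "(case x of (i, j, k) \<Rightarrow> min (w i j + w i k) (min (w i j + w j k) (w i k + w j k)))
         \<le> (case x of (i, j, k) \<Rightarrow> tcost w T i j k)"
    using tcost_ge_min[of T i j k w] T hc_tree_sub[OF T] x xe w unfolding hc_tree_def
    by auto
qed

lemma BC_nonneg:
  assumes w: "\<forall>i<n. \<forall>j<n. w i j \<ge> 0"
  shows "0 \<le> BC n w"
  unfolding BC_def
proof (rule sum_nonneg)
  fix x assume x: "x \<in> triples n"
  obtain i j k where xe: "x = (i,j,k)" by (cases x) auto
  have "i < n" "j < n" "k < n" using x xe unfolding triples_def by auto
  then show "0 \<le> (case x of (i, j, k) \<Rightarrow> min (w i j + w i k) (min (w i j + w j k) (w i k + w j k)))"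
    using w xe by auto
qed

lemma ratio_ge1:
  assumes T: "hc_tree n T" and w: "\<forall>i<n. \<forall>j<n. w i j \<ge> 0"
  shows "1 \<le> ratio n w T"
proof -
  have a: "BC n w \<le> TC n w T" using BC_le_TC[OF T w] .
  have b: "0 \<le> BC n w" using BC_nonneg[OF w] .
  show ?thesis
  proof (cases "BC n w = 0")
    case True then show ?thesis unfolding ratio_def by auto
  next
    case False
    then have "1 \<le> TC n w T / BC n w" using a b by (simp add: field_simps)
    then show ?thesis unfolding ratio_def using False by simp
  qed
qed

lemma rho_ge1:
  assumes w: "\<forall>i<n. \<forall>j<n. w i j \<ge> 0"
  shows "1 \<le> rho_star n w"
  unfolding rho_star_def
  by (rule Inf_greatest) (use ratio_ge1 w in auto)

lemma rho_le:
  assumes T: "hc_tree n T" and w: "\<forall>i<n. \<forall>j<n. w i j \<ge> 0"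
    and c: "0 \<le> C" "1 \<le> C" and le: "TC n w T \<le> C * BC n w"
  shows "rho_star n w \<le> ereal C"
proof -
  have "rho_star n w \<le> ratio n w T" unfolding rho_star_def
    by (rule Inf_lower) (use T in auto)
  also have "ratio n w T \<le> ereal C"
  proof (cases "BC n w = 0")
    case True
    then have "TC n w T = 0" using le BC_le_TC[OF T w] by auto
    then show ?thesis using True c unfolding ratio_def by auto
  next
    case False
    then have "BC n w > 0" using BC_nonneg[OF w] by auto
    then have "TC n w T / BC n w \<le> C" using le by (simp add: field_simps)
    then show ?thesis using False unfolding ratio_def by auto
  qed
  finally show ?thesis .
qed

definition PS :: "nat \<Rightarrow> nat set \<Rightarrow> nat set set" where
  "PS k V = {s. s \<subseteq> V \<and> card s = k}"

lemma finite_PS[simp]: "finite V \<Longrightarrow> finite (PS k V)"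
  unfolding PS_def by (rule finite_subset[of _ "Pow V"]) auto

lemma incidence:
  assumes V: "finite V"
  shows "(\<Sum>s\<in>PS (Suc k) V. \<Sum>x\<in>s. h x (s - {x})) = (\<Sum>x\<in>V. \<Sum>e\<in>PS k (V - {x}). h x e)"
proof -
  have "(\<Sum>s\<in>PS (Suc k) V. \<Sum>x\<in>s. h x (s - {x})) = (\<Sum>(s,x)\<in>Sigma (PS (Suc k) V) (\<lambda>s. s). h x (s - {x}))"
    by (rule sum.Sigma) (use V in \<open>auto simp: PS_def intro: finite_subset\<close>)
  also have "\<dots> = (\<Sum>(x,e)\<in>Sigma V (\<lambda>x. PS k (V - {x})). h x e)"
  proof (rule sum.reindex_bij_witness[where i="\<lambda>(x,e). (insert x e, x)" and j="\<lambda>(s,x). (x, s - {x})"])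
    fix a assume a: "a \<in> Sigma (PS (Suc k) V) (\<lambda>s. s)"
    then obtain s x where [simp]: "a = (s,x)" and s: "s \<subseteq> V" "card s = Suc k" "x \<in> s"
      unfolding PS_def by auto
    have fs: "finite s" using s V finite_subset by auto
    show "(case case a of (s, x) \<Rightarrow> (x, s - {x}) of (x, e) \<Rightarrow> (insert x e, x)) = a"
      using s by auto
    show "(case a of (s, x) \<Rightarrow> (x, s - {x})) \<in> Sigma V (\<lambda>x. PS k (V - {x}))"
      using s fs unfolding PS_def by auto
    show "(case case a of (s, x) \<Rightarrow> (x, s - {x}) of (x, e) \<Rightarrow> h x e) = (case a of (s, x) \<Rightarrow> h x (s - {x}))"
      by simp
  next
    fix b assume b: "b \<in> Sigma V (\<lambda>x. PS k (V - {x}))"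
    then obtain x e where [simp]: "b = (x,e)" and e: "x \<in> V" "e \<subseteq> V - {x}" "card e = k"
      unfolding PS_def by auto
    have fe: "finite e" using e V finite_subset by auto
    have xe: "x \<notin> e" using e by auto
    show "(case case b of (x, e) \<Rightarrow> (insert x e, x) of (s, x) \<Rightarrow> (x, s - {x})) = b"
      using e by auto
    show "(case b of (x, e) \<Rightarrow> (insert x e, x)) \<in> Sigma (PS (Suc k) V) (\<lambda>s. s)"
      using e fe xe unfolding PS_def by auto
  qed
  also have "\<dots> = (\<Sum>x\<in>V. \<Sum>e\<in>PS k (V - {x}). h x e)"
    by (rule sum.Sigma[symmetric]) (use V in auto)
  finally show ?thesis .
qed

lemma PS1_sum: "(\<Sum>e\<in>PS 1 U. f e) = (\<Sum>y\<in>U. f {y})"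
proof -
  have "PS 1 U = (\<lambda>y. {y}) ` U" unfolding PS_def by (auto simp: card_1_singleton_iff)
  then show ?thesis by (simp add: sum.reindex)
qed

lemma card_PS1: "finite U \<Longrightarrow> card (PS 1 U) = card U"
proof -
  have "PS 1 U = (\<lambda>y. {y}) ` U" unfolding PS_def by (auto simp: card_1_singleton_iff)
  then show ?thesis by (simp add: card_image)
qed

definition tripsV :: "nat set \<Rightarrow> (nat \<times> nat \<times> nat) set" where
  "tripsV V = {(i,j,k). i < j \<and> j < k \<and> i \<in> V \<and> j \<in> V \<and> k \<in> V}"

lemma triples_tripsV: "triples n = tripsV {..<n}"
  unfolding triples_def tripsV_def by auto

lemma finite_tripsV[simp]: "finite V \<Longrightarrow> finite (tripsV V)"
  by (rule finite_subset[of _ "V \<times> V \<times> V"]) (auto simp: tripsV_def)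

lemma trip_inj: "inj_on (\<lambda>(i,j,k). {i,j,k::nat}) (tripsV V)"
proof (rule inj_onI)
  fix x y assume x: "x \<in> tripsV V" and y: "y \<in> tripsV V"
    and eq: "(case x of (i, j, k) \<Rightarrow> {i, j, k::nat}) = (case y of (i, j, k) \<Rightarrow> {i, j, k})"
  obtain i j k where [simp]: "x = (i,j,k)" by (cases x) auto
  obtain i' j' k' where [simp]: "y = (i',j',k')" by (cases y) auto
  have o: "i < j" "j < k" "i' < j'" "j' < k'" using x y unfolding tripsV_def by auto
  have e: "{i,j,k} = {i',j',k'}" using eq by simp
  have "i \<in> {i',j',k'}" "j \<in> {i',j',k'}" "k \<in> {i',j',k'}"
       "i' \<in> {i,j,k}" "j' \<in> {i,j,k}" "k' \<in> {i,j,k}" using e by blast+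
  then show "x = y" using o by auto
qed

lemma trip_image: "(\<lambda>(i,j,k). {i,j,k::nat}) ` tripsV V = PS 3 V"
proof
  show "(\<lambda>(i,j,k). {i,j,k::nat}) ` tripsV V \<subseteq> PS 3 V"
    unfolding tripsV_def PS_def by auto
  show "PS 3 V \<subseteq> (\<lambda>(i,j,k). {i,j,k::nat}) ` tripsV V"
  proof
    fix s assume s: "s \<in> PS 3 V"
    then obtain x y z where xyz: "s = {x,y,z}" "x \<noteq> y" "y \<noteq> z" "x \<noteq> z"
      unfolding PS_def by (auto simp: card_3_iff)
    have sub: "s \<subseteq> V" using s unfolding PS_def by auto
    have "\<exists>i j k. i < j \<and> j < k \<and> s = {i,j,k}"
    proof -
      have "x < y \<or> y < x" "y < z \<or> z < y" "x < z \<or> z < x" using xyz by auto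
      then show ?thesis using xyz(1)
        by (metis insert_commute)
    qed
    then obtain i j k where "i < j" "j < k" "s = {i,j,k}" by blast
    then show "s \<in> (\<lambda>(i,j,k). {i,j,k::nat}) ` tripsV V"
      using sub unfolding tripsV_def by (auto intro!: image_eqI[of _ _ "(i,j,k)"])
  qed
qed

lemma sum_trips:
  "(\<Sum>(i,j,k)\<in>tripsV V. g {i,j,k}) = (\<Sum>s\<in>PS 3 V. g s)"
proof -
  have "(\<Sum>s\<in>PS 3 V. g s) = (\<Sum>s\<in>(\<lambda>(i,j,k). {i,j,k::nat}) ` tripsV V. g s)"
    by (simp add: trip_image)
  also have "\<dots> = (\<Sum>t\<in>tripsV V. g ((\<lambda>(i,j,k). {i,j,k::nat}) t))"
    by (rule sum.reindex[OF trip_inj, unfolded comp_def])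
  also have "\<dots> = (\<Sum>(i,j,k)\<in>tripsV V. g {i,j,k})"
    by (rule sum.cong) auto
  finally show ?thesis by simp
qed

lemma strict_prefix_Cons_Cons[simp]: "strict_prefix (a#xs) (a#ys) \<longleftrightarrow> strict_prefix xs ys"
  by (auto simp: strict_prefix_def)

lemma lca_cat_in:
  assumes d: "distinct (lvs T')" and v: "v \<notin> set (lvs T')" and S: "S \<noteq> {}" "S \<subseteq> set (lvs T')"
  shows "lca (Nd [T', Lf v]) S = 0 # lca T' S"
proof -
  have d2: "distinct (lvs (Nd [T', Lf v]))" using d v by simp
  have "isLCA T' S (lca T' S)" using lca_isLCA[OF d S] .
  then have "isLCA (Nd [T', Lf v]) S (0 # lca T' S)"
    using isLCA_Nd_child[OF d2 S(1), of 0] by simp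
  then show ?thesis by (rule lca_eq)
qed

lemma lca_cat_v:
  assumes v: "v \<notin> set (lvs T')" and S: "S \<subseteq> insert v (set (lvs T'))" "v \<in> S" "x \<in> S" "x \<noteq> v"
  shows "lca (Nd [T', Lf v]) S = []"
proof -
  have "isLCA (Nd [T', Lf v]) S []"
  proof (rule isLCA_Nd_root)
    show "S \<subseteq> set (lvs (Nd [T', Lf v]))" using S by auto
    show "\<forall>c<length [T', Lf v]. \<not> S \<subseteq> set (lvs ([T', Lf v] ! c))"
    proof (intro allI impI)
      fix c assume "c < length [T', Lf v]"
      then have "c = 0 \<or> c = 1" by auto
      then show "\<not> S \<subseteq> set (lvs ([T', Lf v] ! c))" using S v by auto
    qed
  qed
  then show ?thesis by (rule lca_eq)
qed

lemma tcost_cat_old: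
  assumes d: "distinct (lvs T')" and v: "v \<notin> set (lvs T')"
    and ijk: "i \<in> set (lvs T')" "j \<in> set (lvs T')" "k \<in> set (lvs T')"
  shows "tcost w (Nd [T', Lf v]) i j k = tcost w T' i j k"
proof -
  have r2: "rel2 (Nd [T', Lf v]) a b c = rel2 T' a b c"
    if "a \<in> set (lvs T')" "b \<in> set (lvs T')" "c \<in> set (lvs T')" for a b c
    unfolding rel2_def using lca_cat_in[OF d v] that by simp
  have r3: "rel3 (Nd [T', Lf v]) a b c = rel3 T' a b c"
    if "a \<in> set (lvs T')" "b \<in> set (lvs T')" "c \<in> set (lvs T')" for a b c
    unfolding rel3_def using lca_cat_in[OF d v] that by simp
  show ?thesis unfolding tcost_def using r2 r3 ijk by simp
qed

lemma tcost_cat_new: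
  assumes d: "distinct (lvs T')" and v: "v \<notin> set (lvs T')"
    and o: "i < j" "j < k" and ijk: "{i,j,k} \<subseteq> insert v (set (lvs T'))" and vin: "v \<in> {i,j,k}"
    and sym: "w i j = w j i" "w i k = w k i" "w j k = w k j"
  shows "tcost w (Nd [T', Lf v]) i j k = (\<Sum>y\<in>{i,j,k} - {v}. w v y)"
proof -
  let ?T = "Nd [T', Lf v]"
  consider "v = i" | "v = j" | "v = k" using vin by auto
  then show ?thesis
  proof cases
    case 1
    then have jk: "j \<in> set (lvs T')" "k \<in> set (lvs T')" using ijk o by auto
    have a: "lca ?T {i,j} = []" using lca_cat_v[OF v, of "{i,j}" j] ijk 1 o by auto
    have b: "lca ?T {i,k} = []" using lca_cat_v[OF v, of "{i,k}" k] ijk 1 o by auto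
    have c: "lca ?T {j,k,i} = []" using lca_cat_v[OF v, of "{j,k,i}" j] ijk 1 o by auto
    have e: "lca ?T {j,k} = 0 # lca T' {j,k}" using lca_cat_in[OF d v] jk by auto
    have "{i,j,k} - {v} = {j,k}" using 1 o by auto
    then show ?thesis unfolding tcost_def rel2_def using a b c e 1 o sym
      by (auto simp: insert_commute)
  next
    case 2
    then have ik: "i \<in> set (lvs T')" "k \<in> set (lvs T')" using ijk o by auto
    have a: "lca ?T {i,j} = []" using lca_cat_v[OF v, of "{i,j}" i] ijk 2 o by auto
    have b: "lca ?T {i,j,k} = []" using lca_cat_v[OF v, of "{i,j,k}" i] ijk 2 o by auto
    have e: "lca ?T {i,k} = 0 # lca T' {i,k}" using lca_cat_in[OF d v] ik by auto
    have "{i,j,k} - {v} = {i,k}" using 2 o by auto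
    then show ?thesis unfolding tcost_def rel2_def using a b e 2 o sym
      by (auto simp: insert_commute)
  next
    case 3
    then have ij: "i \<in> set (lvs T')" "j \<in> set (lvs T')" using ijk o by auto
    have b: "lca ?T {i,j,k} = []" using lca_cat_v[OF v, of "{i,j,k}" i] ijk 3 o by auto
    have e: "lca ?T {i,j} = 0 # lca T' {i,j}" using lca_cat_in[OF d v] ij by auto
    have "{i,j,k} - {v} = {i,j}" using 3 o by auto
    then show ?thesis unfolding tcost_def rel2_def using b e 3 o sym
      by (auto simp: insert_commute)
  qed
qed

definition Dg :: "(nat \<Rightarrow> nat \<Rightarrow> real) \<Rightarrow> nat set \<Rightarrow> nat \<Rightarrow> real" where
  "Dg w V x = (\<Sum>y\<in>V - {x}. w x y)"

definition W2 :: "(nat \<Rightarrow> nat \<Rightarrow> real) \<Rightarrow> nat set \<Rightarrow> real" where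
  "W2 w V = (\<Sum>x\<in>V. Dg w V x)"

definition TCV :: "(nat \<Rightarrow> nat \<Rightarrow> real) \<Rightarrow> nat set \<Rightarrow> htree \<Rightarrow> real" where
  "TCV w V T = (\<Sum>(i,j,k)\<in>tripsV V. tcost w T i j k)"

lemma W2_remove:
  assumes V: "finite V" and v: "v \<in> V" and sym: "\<forall>x\<in>V. \<forall>y\<in>V. w x y = w y x"
  shows "W2 w V = W2 w (V - {v}) + 2 * Dg w V v"
proof -
  let ?V' = "V - {v}"
  have "W2 w V = Dg w V v + (\<Sum>x\<in>?V'. Dg w V x)"
    unfolding W2_def using sum.remove[OF V v] by simp
  also have "(\<Sum>x\<in>?V'. Dg w V x) = (\<Sum>x\<in>?V'. w x v + Dg w ?V' x)"
  proof (rule sum.cong)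
    fix x assume x: "x \<in> ?V'"
    have "V - {x} = insert v (?V' - {x})" using x v by auto
    then show "Dg w V x = w x v + Dg w ?V' x"
      unfolding Dg_def using V by (simp add: Diff_insert_absorb)
  qed simp
  also have "\<dots> = (\<Sum>x\<in>?V'. w v x) + W2 w ?V'"
    unfolding W2_def sum.distrib using sym v by (auto intro!: sum.cong)
  also have "(\<Sum>x\<in>?V'. w v x) = Dg w V v" unfolding Dg_def ..
  finally show ?thesis by simp
qed

lemma sum_PS2_incident:
  assumes U: "finite U"
  shows "(\<Sum>e\<in>PS 2 U. \<Sum>y\<in>e. f y) = (real (card U) - 1) * (\<Sum>y\<in>U. f y)"
proof -
  have "(\<Sum>e\<in>PS 2 U. \<Sum>y\<in>e. f y) = (\<Sum>e\<in>PS (Suc 1) U. \<Sum>y\<in>e. (\<lambda>y (_::nat set). f y) y (e - {y}))"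
    by (simp add: numeral_2_eq_2)
  also have "\<dots> = (\<Sum>y\<in>U. \<Sum>e\<in>PS 1 (U - {y}). f y)"
    by (rule incidence[OF U])
  also have "\<dots> = (\<Sum>y\<in>U. (real (card U) - 1) * f y)"
  proof (rule sum.cong)
    fix y assume y: "y \<in> U"
    have "card (PS 1 (U - {y})) = card U - 1" using card_PS1[of "U - {y}"] U y by simp
    moreover have "card U \<ge> 1" using U y by (metis One_nat_def Suc_leI card_gt_0_iff empty_iff)
    ultimately show "(\<Sum>e\<in>PS 1 (U - {y}). f y) = (real (card U) - 1) * f y"
      by (simp add: of_nat_diff)
  qed simp
  finally show ?thesis by (simp add: sum_distrib_left)
qed

lemma caterpillar:
  assumes "finite V" "card V = Suc n"
    and "\<forall>x\<in>V. \<forall>y\<in>V. w x y = w y x \<and> 0 \<le> w x y"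
  shows "\<exists>T. wf_ht T \<and> distinct (lvs T) \<and> set (lvs T) = V \<and>
             3 * TCV w V T \<le> (real (card V) - 2) * W2 w V"
  using assms
proof (induction n arbitrary: V)
  case 0
  then obtain v where V: "V = {v}" by (metis One_nat_def card_1_singletonE)
  have "tripsV V = {}" unfolding tripsV_def V by auto
  moreover have "W2 w V = 0" unfolding W2_def Dg_def V by simp
  ultimately show ?case using V by (intro exI[of _ "Lf v"]) (simp add: TCV_def)
next
  case (Suc n)
  note V = Suc.prems(1) and cV = Suc.prems(2) and w = Suc.prems(3)
  have ne: "V \<noteq> {}" using cV by auto
  obtain v where v: "v \<in> V" and vmin: "\<forall>x\<in>V. Dg w V v \<le> Dg w V x"
  proof -
    let ?m = "Min (Dg w V ` V)"
    have "?m \<in> Dg w V ` V" using V ne by (intro Min_in) auto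
    then obtain v where "v \<in> V" "Dg w V v = ?m" by auto
    moreover have "\<forall>x\<in>V. ?m \<le> Dg w V x" using V by auto
    ultimately show ?thesis using that by auto
  qed
  define V' where "V' = V - {v}"
  have V': "finite V'" "card V' = Suc n" using V cV v unfolding V'_def by auto
  obtain T' where T': "wf_ht T'" "distinct (lvs T')" "set (lvs T') = V'"
     "3 * TCV w V' T' \<le> (real (card V') - 2) * W2 w V'"
    using Suc.IH[OF V'] w unfolding V'_def by auto
  define T where "T = Nd [T', Lf v]"
  have vT': "v \<notin> set (lvs T')" using T' unfolding V'_def by auto
  have T: "wf_ht T" "distinct (lvs T)" "set (lvs T) = V"
    using T' vT' v unfolding T_def V'_def by auto
  define G where "G s = (\<Sum>y\<in>s - {v}. w v y)" for s
  have pt: "tcost w T i j k = (if v \<in> {i,j,k} then G {i,j,k} else 0)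
              + (if v \<in> {i,j,k} then 0 else tcost w T' i j k)"
    if t: "(i,j,k) \<in> tripsV V" for i j k
  proof (cases "v \<in> {i,j,k}")
    case True
    have o: "i < j" "j < k" and sub: "{i,j,k} \<subseteq> V" using t unfolding tripsV_def by auto
    have "tcost w T i j k = G {i,j,k}" unfolding T_def G_def
      by (rule tcost_cat_new[OF T'(2) vT' o]) (use sub True T' w V'_def in auto)
    then show ?thesis using True by simp
  next
    case False
    have sub: "{i,j,k} \<subseteq> V" using t unfolding tripsV_def by auto
    have "tcost w T i j k = tcost w T' i j k" unfolding T_def
      by (rule tcost_cat_old[OF T'(2) vT']) (use sub False T' V'_def in auto)
    then show ?thesis using False by simp
  qed
  have "TCV w V T = (\<Sum>t\<in>tripsV V. (case t of (i,j,k) \<Rightarrow> (if v \<in> {i,j,k} then G {i,j,k} else 0))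
        + (case t of (i,j,k) \<Rightarrow> (if v \<in> {i,j,k} then 0 else tcost w T' i j k)))"
    unfolding TCV_def by (rule sum.cong) (auto simp: pt)
  also have "\<dots> = (\<Sum>(i,j,k)\<in>tripsV V. (if v \<in> {i,j,k} then G {i,j,k} else 0))
        + (\<Sum>(i,j,k)\<in>tripsV V. (if v \<in> {i,j,k} then 0 else tcost w T' i j k))"
    by (rule sum.distrib)
  also have "(\<Sum>(i,j,k)\<in>tripsV V. (if v \<in> {i,j,k} then 0 else tcost w T' i j k)) = TCV w V' T'"
    unfolding TCV_def
  proof (rule sum.mono_neutral_cong_right)
    show "finite (tripsV V)" using V by simp
    show "tripsV V' \<subseteq> tripsV V" unfolding tripsV_def V'_def by auto
    show "\<forall>i\<in>tripsV V - tripsV V'. (case i of (i, j, k) \<Rightarrow> if v \<in> {i, j, k} then 0 else tcost w T' i j k) = 0"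
      unfolding tripsV_def V'_def by auto
    show "\<And>x. x \<in> tripsV V' \<Longrightarrow> (case x of (i, j, k) \<Rightarrow> if v \<in> {i, j, k} then 0 else tcost w T' i j k)
            = (case x of (i, j, k) \<Rightarrow> tcost w T' i j k)"
      unfolding tripsV_def V'_def by auto
  qed
  also have "(\<Sum>(i,j,k)\<in>tripsV V. (if v \<in> {i,j,k} then G {i,j,k} else 0))
             = (\<Sum>s\<in>PS 3 V. (if v \<in> s then G s else 0))"
    by (rule sum_trips)
  also have "\<dots> = (\<Sum>s\<in>PS (Suc 2) V. \<Sum>x\<in>s. (\<lambda>x e. if x = v then G (insert x e) else 0) x (s - {x}))"
  proof (rule sum.cong)
    fix s assume s: "s \<in> PS (Suc 2) V"
    have fs: "finite s" using s V unfolding PS_def by (auto intro: finite_subset)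
    show "(if v \<in> s then G s else 0) = (\<Sum>x\<in>s. (\<lambda>x e. if x = v then G (insert x e) else 0) x (s - {x}))"
      using fs by (simp add: insert_absorb)
  qed simp
  also have "\<dots> = (\<Sum>x\<in>V. \<Sum>e\<in>PS 2 (V - {x}). if x = v then G (insert x e) else 0)"
    by (rule incidence[OF V])
  also have "\<dots> = (\<Sum>x\<in>V. if x = v then (\<Sum>e\<in>PS 2 (V - {x}). G (insert x e)) else 0)"
    by (rule sum.cong) auto
  also have "\<dots> = (\<Sum>e\<in>PS 2 V'. G (insert v e))"
    using V v unfolding V'_def by simp
  also have "\<dots> = (\<Sum>e\<in>PS 2 V'. \<Sum>y\<in>e. w v y)"
  proof (rule sum.cong)
    fix e assume "e \<in> PS 2 V'"
    then have "v \<notin> e" unfolding PS_def V'_def by auto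
    then show "G (insert v e) = (\<Sum>y\<in>e. w v y)" unfolding G_def by simp
  qed simp
  also have "\<dots> = (real (card V') - 1) * (\<Sum>y\<in>V'. w v y)"
    by (rule sum_PS2_incident[OF V'(1)])
  also have "(\<Sum>y\<in>V'. w v y) = Dg w V v" unfolding Dg_def V'_def ..
  finally have TCeq: "TCV w V T = (real (card V') - 1) * Dg w V v + TCV w V' T'" by simp
  have W2eq: "W2 w V = W2 w V' + 2 * Dg w V v"
    unfolding V'_def by (rule W2_remove[OF V v]) (use w in auto)
  have "W2 w V = (\<Sum>x\<in>V. Dg w V x)" unfolding W2_def ..
  also have "\<dots> \<ge> (\<Sum>x\<in>V. Dg w V v)" using vmin by (intro sum_mono) auto
  finally have Dmin: "real (card V) * Dg w V v \<le> W2 w V" by simp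
  have cV'r: "real (card V') = real (card V) - 1" using V' cV by simp
  have "3 * TCV w V T = 3 * (real (card V) - 2) * Dg w V v + 3 * TCV w V' T'"
    using TCeq cV'r by (simp add: algebra_simps)
  also have "\<dots> \<le> 3 * (real (card V) - 2) * Dg w V v + (real (card V) - 3) * W2 w V'"
    using T'(4) cV'r by simp
  also have "\<dots> = (real (card V) - 3) * W2 w V + real (card V) * Dg w V v"
    using W2eq by (simp add: algebra_simps)
  also have "\<dots> \<le> (real (card V) - 2) * W2 w V"
    using Dmin by (simp add: algebra_simps)
  finally show ?case using T by blast
qed

lemma sum_PS2_prod:
  fixes g :: "nat \<Rightarrow> real"
  assumes U: "finite U"
  shows "2 * (\<Sum>e\<in>PS 2 U. \<Prod>y\<in>e. g y) = (\<Sum>y\<in>U. g y)^2 - (\<Sum>y\<in>U. (g y)^2)"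
proof -
  have "2 * (\<Sum>e\<in>PS 2 U. \<Prod>y\<in>e. g y) = (\<Sum>e\<in>PS 2 U. \<Sum>y\<in>e. g y * (\<Prod>z\<in>e - {y}. g z))"
    unfolding sum_distrib_left
  proof (rule sum.cong)
    fix e assume e: "e \<in> PS 2 U"
    have fe: "finite e" and ce: "card e = 2" using e U unfolding PS_def by (auto intro: finite_subset)
    have "(\<Sum>y\<in>e. g y * (\<Prod>z\<in>e - {y}. g z)) = (\<Sum>y\<in>e. (\<Prod>z\<in>e. g z))"
      by (rule sum.cong) (use fe in \<open>auto simp: prod.remove\<close>)
    also have "\<dots> = 2 * (\<Prod>z\<in>e. g z)" using ce by simp
    finally show "2 * (\<Prod>y\<in>e. g y) = (\<Sum>y\<in>e. g y * (\<Prod>z\<in>e - {y}. g z))" by simp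
  qed simp
  also have "\<dots> = (\<Sum>e\<in>PS (Suc 1) U. \<Sum>y\<in>e. (\<lambda>y e. g y * (\<Prod>z\<in>e. g z)) y (e - {y}))"
    by (simp add: numeral_2_eq_2)
  also have "\<dots> = (\<Sum>y\<in>U. \<Sum>e\<in>PS 1 (U - {y}). g y * (\<Prod>z\<in>e. g z))"
    by (rule incidence[OF U])
  also have "\<dots> = (\<Sum>y\<in>U. g y * ((\<Sum>z\<in>U. g z) - g y))"
  proof (rule sum.cong)
    fix y assume y: "y \<in> U"
    have "(\<Sum>e\<in>PS 1 (U - {y}). g y * (\<Prod>z\<in>e. g z)) = (\<Sum>z\<in>U - {y}. g y * g z)"
      using PS1_sum[of "\<lambda>e. g y * (\<Prod>z\<in>e. g z)" "U - {y}"] by simp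
    also have "\<dots> = g y * (\<Sum>z\<in>U - {y}. g z)" by (simp add: sum_distrib_left)
    also have "(\<Sum>z\<in>U - {y}. g z) = (\<Sum>z\<in>U. g z) - g y" using sum.remove[OF U y, of g] by simp
    finally show "(\<Sum>e\<in>PS 1 (U - {y}). g y * (\<Prod>z\<in>e. g z)) = g y * ((\<Sum>z\<in>U. g z) - g y)" .
  qed simp
  also have "\<dots> = (\<Sum>y\<in>U. g y)^2 - (\<Sum>y\<in>U. (g y)^2)"
    by (simp add: algebra_simps power2_eq_square sum_subtractf sum_distrib_left sum_distrib_right)
  finally show ?thesis .
qed

definition zo :: "(nat \<Rightarrow> nat \<Rightarrow> real) \<Rightarrow> nat set \<Rightarrow> bool" where
  "zo w V \<longleftrightarrow> (\<forall>x\<in>V. \<forall>y\<in>V. w x y = w y x \<and> (w x y = 0 \<or> w x y = 1))"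

lemma BC_lower_zo:
  assumes zo: "zo w {..<n}"
  shows "(\<Sum>x<n. (Dg w {..<n} x)^2 - Dg w {..<n} x) \<le> 3 * BC n w"
proof -
  let ?V = "{..<n}"
  define Q where "Q s = (\<Sum>x\<in>s. \<Prod>y\<in>s - {x}. w x y)" for s
  have pt: "2 * Q {i,j,k} \<le> 3 * min (w i j + w i k) (min (w i j + w j k) (w i k + w j k))"
    if t: "(i,j,k) \<in> tripsV ?V" for i j k
  proof -
    have o: "i < j" "j < k" "i < n" "j < n" "k < n" using t unfolding tripsV_def by auto
    have e1: "{i,j,k} - {i} = {j,k}" "{i,j,k} - {j} = {i,k}" "{i,j,k} - {k} = {i,j}" using o by auto
    have "Q {i,j,k} = w i j * w i k + w j i * w j k + w k i * w k j"
      unfolding Q_def using o e1 by (simp add: insert_Diff_if)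
    moreover have "w j i = w i j" "w k i = w i k" "w k j = w j k"
      "w i j = 0 \<or> w i j = 1" "w i k = 0 \<or> w i k = 1" "w j k = 0 \<or> w j k = 1"
      using zo o unfolding zo_def by auto
    ultimately show ?thesis by auto
  qed
  have "2 * (\<Sum>(i,j,k)\<in>tripsV ?V. Q {i,j,k}) \<le> 3 * BC n w"
    unfolding BC_def triples_tripsV sum_distrib_left
    by (rule sum_mono) (use pt in auto)
  moreover have "(\<Sum>(i,j,k)\<in>tripsV ?V. Q {i,j,k}) = (\<Sum>s\<in>PS 3 ?V. Q s)" by (rule sum_trips)
  moreover have "(\<Sum>s\<in>PS 3 ?V. Q s) = (\<Sum>s\<in>PS (Suc 2) ?V. \<Sum>x\<in>s. (\<lambda>x e. \<Prod>y\<in>e. w x y) x (s - {x}))"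
    unfolding Q_def by simp
  moreover have "\<dots> = (\<Sum>x\<in>?V. \<Sum>e\<in>PS 2 (?V - {x}). \<Prod>y\<in>e. w x y)"
    by (rule incidence) simp
  moreover have "2 * (\<Sum>x\<in>?V. \<Sum>e\<in>PS 2 (?V - {x}). \<Prod>y\<in>e. w x y)
      = (\<Sum>x\<in>?V. 2 * (\<Sum>e\<in>PS 2 (?V - {x}). \<Prod>y\<in>e. w x y))"
    by (rule sum_distrib_left)
  moreover have "(\<Sum>x\<in>?V. 2 * (\<Sum>e\<in>PS 2 (?V - {x}). \<Prod>y\<in>e. w x y))
      = (\<Sum>x\<in>?V. (Dg w ?V x)^2 - Dg w ?V x)"
  proof (rule sum.cong)
    fix x assume x: "x \<in> ?V"
    have "(\<Sum>y\<in>?V - {x}. (w x y)^2) = (\<Sum>y\<in>?V - {x}. w x y)"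
    proof (rule sum.cong)
      fix y assume y: "y \<in> ?V - {x}"
      have "w x y = 0 \<or> w x y = 1" using zo x y unfolding zo_def by auto
      then show "(w x y)^2 = w x y" by auto
    qed simp
    then show "2 * (\<Sum>e\<in>PS 2 (?V - {x}). \<Prod>y\<in>e. w x y) = (Dg w ?V x)^2 - Dg w ?V x"
      using sum_PS2_prod[of "?V - {x}" "w x"] unfolding Dg_def by simp
  qed simp
  ultimately show ?thesis by simp
qed

lemma sum_sq_ge:
  fixes d :: "nat \<Rightarrow> real"
  assumes "finite V" "V \<noteq> {}"
  shows "(\<Sum>x\<in>V. d x)^2 \<le> real (card V) * (\<Sum>x\<in>V. (d x)^2)"
proof -
  let ?N = "real (card V)" and ?S = "\<Sum>x\<in>V. d x"
  have N: "?N > 0" using assms by (simp add: card_gt_0_iff)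
  have "0 \<le> (\<Sum>x\<in>V. (?N * d x - ?S)^2)" by (simp add: sum_nonneg)
  also have "\<dots> = (\<Sum>x\<in>V. ?N^2 * (d x)^2 - (2 * ?N * ?S) * d x + ?S^2)"
    by (rule sum.cong) (simp_all add: power2_eq_square algebra_simps)
  also have "\<dots> = ?N^2 * (\<Sum>x\<in>V. (d x)^2) - (2 * ?N * ?S) * ?S + ?N * ?S^2"
    by (simp add: sum.distrib sum_subtractf sum_distrib_left)
  finally have "?N * ?S^2 \<le> ?N^2 * (\<Sum>x\<in>V. (d x)^2)" by (simp add: power2_eq_square algebra_simps)
  then show ?thesis using N by (simp add: power2_eq_square mult.assoc)
qed

lemma zo_unw: "zo (unw E) V"
  unfolding zo_def unw_def by (auto simp: insert_commute)

lemma unw_nonneg: "0 \<le> unw E i j" unfolding unw_def by auto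

lemma E_sub: "simple_graph n E \<Longrightarrow> E \<subseteq> PS 2 {..<n}"
  unfolding simple_graph_def PS_def by auto

lemma finite_E: "simple_graph n E \<Longrightarrow> finite E"
  using E_sub finite_PS[of "{..<n}" 2] finite_subset by blast

lemma W2_unw:
  assumes sg: "simple_graph n E"
  shows "W2 (unw E) {..<n} = 2 * real (card E)"
proof -
  let ?V = "{..<n::nat}"
  define h where "h x e = (if insert x e \<in> E then 1 else (0::real))" for x e
  have "W2 (unw E) ?V = (\<Sum>x\<in>?V. \<Sum>e\<in>PS 1 (?V - {x}). h x e)"
    unfolding W2_def Dg_def PS1_sum h_def unw_def by simp
  also have "\<dots> = (\<Sum>s\<in>PS (Suc 1) ?V. \<Sum>x\<in>s. h x (s - {x}))"
    by (rule incidence[symmetric]) simp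
  also have "\<dots> = (\<Sum>s\<in>PS 2 ?V. 2 * (if s \<in> E then 1 else 0))"
  proof (rule sum.cong)
    show "PS (Suc 1) ?V = PS 2 ?V" by (simp add: numeral_2_eq_2)
  next
    fix s assume s: "s \<in> PS 2 ?V"
    have fs: "finite s" and cs: "card s = 2" using s unfolding PS_def by (auto intro: finite_subset)
    have "(\<Sum>x\<in>s. h x (s - {x})) = (\<Sum>x\<in>s. (if s \<in> E then 1 else 0))"
      by (rule sum.cong) (auto simp: h_def insert_absorb)
    then show "(\<Sum>x\<in>s. h x (s - {x})) = 2 * (if s \<in> E then 1 else 0)" using cs by simp
  qed
  also have "\<dots> = 2 * (\<Sum>s\<in>PS 2 ?V. (if s \<in> E then 1 else 0))" by (simp add: sum_distrib_left)
  also have "(\<Sum>s\<in>PS 2 ?V. (if s \<in> E then 1 else (0::real))) = (\<Sum>s\<in>E. 1)"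
    by (rule sum.mono_neutral_cong_right) (use E_sub[OF sg] in auto)
  finally show ?thesis by simp
qed

lemma nb_exists:
  assumes sg: "simple_graph n E" and cg: "connected_graph n E" and n: "n \<ge> 2" and x: "x < n"
  shows "\<exists>z. {x,z} \<in> E \<and> z \<noteq> x \<and> z < n"
proof -
  define y where "y = (if x = 0 then 1 else (0::nat))"
  have y: "y < n" "y \<noteq> x" using n x unfolding y_def by auto
  have "(x,y) \<in> {(a, b). {a, b} \<in> E}\<^sup>*" using cg x y unfolding connected_graph_def by auto
  then obtain z where "{x,z} \<in> E"
    using y(2) by (cases rule: converse_rtranclE) auto
  moreover then obtain a b where "{x,z} = {a,b}" "a \<noteq> b" "a < n" "b < n"
    using sg unfolding simple_graph_def by blast
  ultimately have "z \<noteq> x" "z < n" using x by (auto simp: doubleton_eq_iff)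
  then show ?thesis using \<open>{x,z} \<in> E\<close> by blast
qed

lemma deg_ge1:
  assumes sg: "simple_graph n E" and cg: "connected_graph n E" and n: "n \<ge> 2" and x: "x < n"
  shows "1 \<le> Dg (unw E) {..<n} x"
proof -
  obtain z where z: "{x,z} \<in> E" "z \<noteq> x" "z < n" using nb_exists[OF sg cg n x] by blast
  have "unw E x z \<le> Dg (unw E) {..<n} x" unfolding Dg_def
    by (rule member_le_sum) (use z unw_nonneg in auto)
  then show ?thesis using z unfolding unw_def by simp
qed

lemma deg_unique:
  assumes x: "x < n" and d: "Dg (unw E) {..<n} x \<le> 1"
    and a: "{x,a} \<in> E" "a \<noteq> x" "a < n" and b: "{x,b} \<in> E" "b \<noteq> x" "b < n"
  shows "a = b"
proof (rule ccontr)
  assume ab: "a \<noteq> b"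
  have "(\<Sum>y\<in>{a,b}. unw E x y) \<le> Dg (unw E) {..<n} x" unfolding Dg_def
    by (rule sum_mono2) (use a b unw_nonneg in auto)
  then show False using ab a b d unfolding unw_def by simp
qed

lemma W2_gt:
  assumes sg: "simple_graph n E" and cg: "connected_graph n E" and n: "n \<ge> 3"
  shows "real n < W2 (unw E) {..<n}"
proof (rule ccontr)
  let ?V = "{..<n}"
  let ?d = "Dg (unw E) ?V"
  assume "\<not> real n < W2 (unw E) ?V"
  then have le: "W2 (unw E) ?V \<le> real n" by simp
  have ge1: "\<And>x. x < n \<Longrightarrow> 1 \<le> ?d x" using deg_ge1[OF sg cg] n by auto
  have d1: "?d x \<le> 1" if x: "x < n" for x
  proof (rule ccontr)
    assume "\<not> ?d x \<le> 1"
    then have gt: "?d x > 1" by simp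
    have "W2 (unw E) ?V = ?d x + (\<Sum>y\<in>?V - {x}. ?d y)"
      unfolding W2_def using sum.remove[of ?V x ?d] x by simp
    moreover have "(\<Sum>y\<in>?V - {x}. ?d y) \<ge> (\<Sum>y\<in>?V - {x}. 1)"
      by (rule sum_mono) (use ge1 in auto)
    moreover have "(\<Sum>y\<in>?V - {x}. (1::real)) = real n - 1" using x by simp
    ultimately show False using le gt by simp
  qed
  have n0: "0 < n" using n by simp
  obtain p where p: "{0,p} \<in> E" "p \<noteq> 0" "p < n" using nb_exists[OF sg cg _ n0] n by auto
  have reach: "y = 0 \<or> y = p" if "(0,y) \<in> {(a, b). {a, b} \<in> E}\<^sup>*" for y
    using that
  proof (induction rule: rtrancl_induct)
    case base then show ?case by simp
  next
    case (step y z)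
    then have yz: "{y,z} \<in> E" by simp
    then obtain a b where ab: "{y,z} = {a,b}" "a \<noteq> b" "a < n" "b < n"
      using sg unfolding simple_graph_def by blast
    then have yzn: "y < n" "z < n" "y \<noteq> z" by (auto simp: doubleton_eq_iff)
    show ?case
    proof (cases "y = 0")
      case True
      then have "z = p" using deg_unique[OF n0 d1[OF n0], of z p] yz yzn p by auto
      then show ?thesis by simp
    next
      case False
      then have yp: "y = p" using step.IH by simp
      have "{p,0} \<in> E" using p by (simp add: insert_commute)
      then have "z = 0" using deg_unique[OF p(3) d1[OF p(3)], of z 0] yz yzn yp p by auto
      then show ?thesis by simp
    qed
  qed
  define q where "q = (if p = 1 then 2 else (1::nat))"
  have q: "q < n" "q \<noteq> 0" "q \<noteq> p" using n unfolding q_def by auto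
  have "(0,q) \<in> {(a, b). {a, b} \<in> E}\<^sup>*" using cg q n0 unfolding connected_graph_def by auto
  then show False using reach q by auto
qed

lemma rho_le2:
  assumes T: "hc_tree n T" and w: "\<forall>i<n. \<forall>j<n. w i j \<ge> 0"
    and b: "0 < BC n w" and le: "TC n w T \<le> C * BC n w"
  shows "rho_star n w \<le> ereal C"
proof -
  have "rho_star n w \<le> ratio n w T" unfolding rho_star_def
    by (rule Inf_lower) (use T in auto)
  also have "ratio n w T \<le> ereal C"
  proof -
    have "TC n w T / BC n w \<le> C" using le b by (simp add: field_simps)
    then show ?thesis using b unfolding ratio_def by auto
  qed
  finally show ?thesis .
qed

lemma part2:
  assumes n: "n \<ge> 3" and sg: "simple_graph n E" and cg: "connected_graph n E"
  shows "rho_star n (unw E) \<le>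
              ereal ((real n ^ 2 - 2 * real n) / (2 * real (card E) - real n))"
proof -
  let ?w = "unw E" and ?V = "{..<n}"
  have wn: "\<forall>i<n. \<forall>j<n. ?w i j \<ge> 0" using unw_nonneg by auto
  have cV: "card ?V = Suc (n - 1)" using n by simp
  obtain T where T: "wf_ht T" "distinct (lvs T)" "set (lvs T) = ?V"
      "3 * TCV ?w ?V T \<le> (real (card ?V) - 2) * W2 ?w ?V"
    using caterpillar[OF _ cV, of ?w] zo_unw[of E ?V] unw_nonneg[of E] unfolding zo_def by auto
  have hc: "hc_tree n T" using T unfolding hc_tree_def by auto
  define W where "W = W2 ?w ?V"
  define N where "N = real n"
  define B where "B = BC n ?w"
  define X where "X = TC n ?w T"
  have N3: "N \<ge> 3" using n unfolding N_def by simp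
  have WN: "W > N" using W2_gt[OF sg cg n] unfolding W_def N_def .
  have Wm: "W = 2 * real (card E)" using W2_unw[OF sg] unfolding W_def .
  have X: "3 * X \<le> (N - 2) * W" using T(4) unfolding X_def W_def N_def TC_def TCV_def triples_tripsV
    by simp
  have sd: "(\<Sum>x<n. Dg ?w ?V x) = W" unfolding W_def W2_def ..
  have B1: "(\<Sum>x<n. (Dg ?w ?V x)^2 - Dg ?w ?V x) \<le> 3 * B"
    using BC_lower_zo[OF zo_unw] unfolding B_def .
  have cs: "W^2 \<le> N * (\<Sum>x<n. (Dg ?w ?V x)^2)"
  proof -
    have "0 \<in> ?V" using n by auto
    then have "?V \<noteq> {}" by blast
    then show ?thesis using sum_sq_ge[of ?V "Dg ?w ?V"] unfolding sd N_def by simp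
  qed
  have "(\<Sum>x<n. (Dg ?w ?V x)^2 - Dg ?w ?V x) = (\<Sum>x<n. (Dg ?w ?V x)^2) - W"
    using sd by (simp add: sum_subtractf)
  then have B2: "W^2 \<le> N * (3 * B + W)" using B1 cs N3
    by (smt (verit, best) mult_left_mono)
  have Bge: "B \<ge> W * (W - N) / (3 * N)"
  proof -
    have "W * (W - N) \<le> 3 * N * B" using B2 by (simp add: algebra_simps power2_eq_square)
    then show ?thesis using N3 by (simp add: field_simps)
  qed
  have Bpos: "B > 0"
  proof -
    have "W * (W - N) / (3 * N) > 0" using WN N3 by simp
    then show ?thesis using Bge by simp
  qed
  have coef: "(N^2 - 2 * N) / (W - N) \<ge> 0" using N3 WN by (simp add: power2_eq_square)
  have "(N^2 - 2 * N) / (W - N) * (W * (W - N) / (3 * N)) = (N - 2) * W / 3"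
    using N3 WN by (simp add: field_simps power2_eq_square)
  moreover have "(N^2 - 2 * N) / (W - N) * (W * (W - N) / (3 * N)) \<le> (N^2 - 2 * N) / (W - N) * B"
    by (rule mult_left_mono[OF Bge coef])
  ultimately have "X \<le> (N^2 - 2 * N) / (W - N) * B" using X by simp
  then show ?thesis
    using rho_le2[OF hc wn, of "(N^2 - 2 * N) / (W - N)"] Bpos
    unfolding X_def B_def N_def Wm by simp
qed

definition T2 :: "nat list list \<Rightarrow> htree" where
  "T2 bs = Nd (map (\<lambda>b. Nd (map Lf b)) bs)"

lemma lvs_map_Lf[simp]: "lvs (Nd (map Lf b)) = b"
  by (induction b) auto

lemma lvs_T2[simp]: "lvs (T2 bs) = concat bs"
  unfolding T2_def by (simp add: comp_def)

lemma wf_T2: "bs \<noteq> [] \<Longrightarrow> (\<forall>b\<in>set bs. b \<noteq> []) \<Longrightarrow> wf_ht (T2 bs)"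
  unfolding T2_def by auto

lemma lca_T2_in:
  assumes d: "distinct (concat bs)" and b: "b \<in> set bs" and S: "S \<subseteq> set b" "x \<in> S" "y \<in> S" "x \<noteq> y"
  shows "\<exists>c<length bs. lca (T2 bs) S = [c]"
proof -
  obtain c where c: "c < length bs" "bs ! c = b" using b by (auto simp: in_set_conv_nth)
  have leaf: "isLCA (Nd (map Lf b)) S []"
  proof (rule isLCA_Nd_root)
    show "S \<subseteq> set (lvs (Nd (map Lf b)))" using S by simp
    show "\<forall>d<length (map Lf b). \<not> S \<subseteq> set (lvs (map Lf b ! d))"
      using S by auto
  qed
  have "isLCA (T2 bs) S (c # [])" unfolding T2_def
    by (rule isLCA_Nd_child) (use d S c leaf in \<open>auto simp: comp_def\<close>)
  then show ?thesis using lca_eq c by blast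
qed

lemma lca_T2_out:
  assumes S: "S \<subseteq> set (concat bs)" and n: "\<forall>b\<in>set bs. \<not> S \<subseteq> set b"
  shows "lca (T2 bs) S = []"
proof -
  have "isLCA (T2 bs) S []" unfolding T2_def
    by (rule isLCA_Nd_root) (use S n in \<open>auto simp: comp_def\<close>)
  then show ?thesis by (rule lca_eq)
qed

lemma rel2_T2:
  assumes d: "distinct (concat bs)" and small: "\<forall>b\<in>set bs. length b \<le> 2"
    and ijk: "{i,j,k} \<subseteq> set (concat bs)" "i \<noteq> j" "i \<noteq> k" "j \<noteq> k"
  shows "rel2 (T2 bs) i j k \<longleftrightarrow> (\<exists>b\<in>set bs. {i,j} \<subseteq> set b)"
proof -
  have n3: "\<not> {i,j,k} \<subseteq> set b" if "b \<in> set bs" for b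
  proof
    assume "{i,j,k} \<subseteq> set b"
    then have "card {i,j,k} \<le> card (set b)" by (simp add: card_mono)
    also have "\<dots> \<le> length b" by (rule card_length)
    also have "\<dots> \<le> 2" using small that by auto
    finally show False using ijk by simp
  qed
  have l3: "lca (T2 bs) {i,j,k} = []" using lca_T2_out[OF ijk(1)] n3 by blast
  show ?thesis
  proof (cases "\<exists>b\<in>set bs. {i,j} \<subseteq> set b")
    case True
    then obtain b where "b \<in> set bs" "{i,j} \<subseteq> set b" by blast
    then obtain c where "lca (T2 bs) {i,j} = [c]" using lca_T2_in[OF d, of b "{i,j}" i j] ijk by auto
    then show ?thesis using True l3 unfolding rel2_def by (simp add: strict_prefix_def)
  next
    case False
    then have "lca (T2 bs) {i,j} = []" using lca_T2_out[of "{i,j}" bs] ijk by auto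
    then show ?thesis using False l3 unfolding rel2_def by simp
  qed
qed

definition Mat :: "nat set set \<Rightarrow> nat \<Rightarrow> bool" where
  "Mat M n \<longleftrightarrow> M \<subseteq> PS 2 {..<n} \<and> (\<forall>e\<in>M. \<forall>f\<in>M. e \<noteq> f \<longrightarrow> e \<inter> f = {})"

definition mate :: "nat set set \<Rightarrow> nat \<Rightarrow> nat" where
  "mate M v = (if \<exists>u. {v,u} \<in> M then THE u. {v,u} \<in> M else v)"

lemma Mat_card:
  assumes M: "Mat M n" and ab: "{a,b} \<in> M"
  shows "a \<noteq> b \<and> a < n \<and> b < n"
proof -
  have "{a,b} \<in> PS 2 {..<n}" using M ab unfolding Mat_def by blast
  then have c: "card {a,b} = 2" and s: "{a,b} \<subseteq> {..<n}" unfolding PS_def by auto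
  have "a \<noteq> b" using c by (cases "a = b") auto
  then show ?thesis using s by auto
qed

lemma mate_in:
  assumes M: "Mat M n" and vu: "{v,u} \<in> M"
  shows "mate M v = u"
proof -
  have uniq: "u' = u" if "{v,u'} \<in> M" for u'
  proof (rule ccontr)
    assume "u' \<noteq> u"
    have "u \<noteq> v" "u' \<noteq> v" using Mat_card[OF M vu] Mat_card[OF M that] by auto
    then have "{v,u} \<noteq> {v,u'}" using \<open>u' \<noteq> u\<close> by (auto simp: doubleton_eq_iff)
    have D: "\<forall>e\<in>M. \<forall>f\<in>M. e \<noteq> f \<longrightarrow> e \<inter> f = {}" using M unfolding Mat_def by simp
    have "{v,u} \<inter> {v,u'} = {}" by (rule D[rule_format, OF vu that \<open>{v,u} \<noteq> {v,u'}\<close>])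
    then show False by simp
  qed
  have th: "(THE u. {v,u} \<in> M) = u" by (rule the_equality) (use vu uniq in blast)+
  have ex: "\<exists>u. {v,u} \<in> M" using vu by blast
  show ?thesis unfolding mate_def using ex th by simp
qed

lemma mate_M:
  assumes M: "Mat M n" and ne: "mate M v \<noteq> v"
  shows "{v, mate M v} \<in> M"
proof -
  have "\<exists>u. {v,u} \<in> M" using ne unfolding mate_def by (cases "\<exists>u. {v,u} \<in> M") auto
  then obtain u where u: "{v,u} \<in> M" by blast
  then show ?thesis using mate_in[OF M u] by simp
qed

lemma mate_inv:
  assumes M: "Mat M n" shows "mate M (mate M v) = v"
proof (cases "mate M v = v")
  case True then show ?thesis by simp
next
  case False
  then have "{v, mate M v} \<in> M" by (rule mate_M[OF M])
  then have "{mate M v, v} \<in> M" by (simp add: insert_commute)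
  then show ?thesis by (rule mate_in[OF M])
qed

lemma mate_lt:
  assumes M: "Mat M n" and v: "v < n"
  shows "mate M v < n"
proof (cases "mate M v = v")
  case True then show ?thesis using v by simp
next
  case False then show ?thesis using Mat_card[OF M mate_M[OF M False]] by simp
qed

definition blk :: "nat set set \<Rightarrow> nat \<Rightarrow> nat list" where
  "blk M v = (if mate M v = v then [v] else [v, mate M v])"

definition bsM :: "nat set set \<Rightarrow> nat \<Rightarrow> nat list list" where
  "bsM M n = map (blk M) (filter (\<lambda>v. v \<le> mate M v) [0..<n])"

lemma set_blk[simp]: "set (blk M v) = {v, mate M v}"
  unfolding blk_def by auto

lemma set_bsM:
  assumes M: "Mat M n" shows "set (concat (bsM M n)) = {..<n}"
proof
  show "set (concat (bsM M n)) \<subseteq> {..<n}"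
    unfolding bsM_def using mate_lt[OF M] by auto
  show "{..<n} \<subseteq> set (concat (bsM M n))"
  proof
    fix x assume x: "x \<in> {..<n}"
    show "x \<in> set (concat (bsM M n))"
    proof (cases "x \<le> mate M x")
      case True then show ?thesis using x unfolding bsM_def by auto
    next
      case False
      let ?m = "mate M x"
      have "?m \<le> mate M ?m" using False mate_inv[OF M, of x] by simp
      moreover have "?m < n" using mate_lt[OF M] x by auto
      moreover have "x \<in> set (blk M ?m)" using mate_inv[OF M, of x] by simp
      ultimately show ?thesis unfolding bsM_def by force
    qed
  qed
qed

lemma distinct_bsM:
  assumes M: "Mat M n" shows "distinct (concat (bsM M n))"
proof -
  let ?L = "filter (\<lambda>v. v \<le> mate M v) [0..<n]"
  have blk_ne: "blk M v \<noteq> []" for v unfolding blk_def by auto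
  have hd: "hd (blk M v) = v" for v unfolding blk_def by auto
  have inj: "inj_on (blk M) (set ?L)" by (rule inj_on_inverseI[of _ hd]) (simp add: hd)
  have "[] \<notin> set (bsM M n)" unfolding bsM_def blk_def by auto
  then have rm: "removeAll [] (bsM M n) = bsM M n" by (rule removeAll_id)
  have dist1: "distinct (removeAll [] (bsM M n))"
    unfolding rm unfolding bsM_def using inj by (simp add: distinct_map)
  have dist2: "distinct ys" if "ys \<in> set (bsM M n)" for ys
    using that unfolding bsM_def blk_def by auto
  have disj: "set ys \<inter> set zs = {}"
    if "ys \<in> set (bsM M n)" "zs \<in> set (bsM M n)" "ys \<noteq> zs" for ys zs
  proof -
    have "ys \<in> blk M ` {u. u < n \<and> u \<le> mate M u}" using that(1) unfolding bsM_def by simp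
    then obtain u where u: "u \<le> mate M u" "ys = blk M u" by blast
    have "zs \<in> blk M ` {u. u < n \<and> u \<le> mate M u}" using that(2) unfolding bsM_def by simp
    then obtain v where v: "v \<le> mate M v" "zs = blk M v" by blast
    have uv: "u \<noteq> v" using u v that(3) by auto
    have mi: "mate M (mate M u) = u" "mate M (mate M v) = v" using mate_inv[OF M] by auto
    show ?thesis
    proof (rule ccontr)
      assume "set ys \<inter> set zs \<noteq> {}"
      then have "u = v \<or> u = mate M v \<or> mate M u = v \<or> mate M u = mate M v"
        using u v by auto
      then show False by (elim disjE) (use uv u v mi in auto)
    qed
  qed
  show ?thesis unfolding distinct_concat_iff using dist1 dist2 disj by blast
qed

lemma small_bsM: "\<forall>b\<in>set (bsM M n). length b \<le> 2"
  unfolding bsM_def blk_def by auto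

lemma inblock_bsM:
  assumes M: "Mat M n" and xy: "x \<noteq> y" "x < n" "y < n"
  shows "(\<exists>b\<in>set (bsM M n). {x,y} \<subseteq> set b) \<longleftrightarrow> {x,y} \<in> M"
proof
  assume "\<exists>b\<in>set (bsM M n). {x,y} \<subseteq> set b"
  then obtain v where v: "{x,y} \<subseteq> {v, mate M v}" unfolding bsM_def by auto
  then have ne: "mate M v \<noteq> v" using xy by auto
  have "{x,y} = {v, mate M v}" using v xy by auto
  then show "{x,y} \<in> M" using mate_M[OF M ne] by simp
next
  assume e: "{x,y} \<in> M"
  have mx: "mate M x = y" using mate_in[OF M e] .
  have my: "mate M y = x" using mate_in[OF M, of y x] e by (simp add: insert_commute)
  show "\<exists>b\<in>set (bsM M n). {x,y} \<subseteq> set b"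
  proof (cases "x < y")
    case True
    then have "blk M x \<in> set (bsM M n)" using mx xy unfolding bsM_def by auto
    then show ?thesis using mx by (intro bexI[of _ "blk M x"]) auto
  next
    case False
    then have "blk M y \<in> set (bsM M n)" using my xy unfolding bsM_def by auto
    then show ?thesis using my by (intro bexI[of _ "blk M y"]) auto
  qed
qed

definition TM :: "nat set set \<Rightarrow> nat \<Rightarrow> htree" where
  "TM M n = T2 (bsM M n)"

lemma hc_TM:
  assumes M: "Mat M n" and n: "n \<ge> 1"
  shows "hc_tree n (TM M n)"
proof -
  have "0 \<in> set (filter (\<lambda>v. v \<le> mate M v) [0..<n])" using n by auto
  then have "filter (\<lambda>v. v \<le> mate M v) [0..<n] \<noteq> []" by (metis equals0D set_empty)
  then have "bsM M n \<noteq> []" unfolding bsM_def by simp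
  moreover have "\<forall>b\<in>set (bsM M n). b \<noteq> []" unfolding bsM_def blk_def by auto
  ultimately show ?thesis unfolding hc_tree_def TM_def
    using wf_T2 distinct_bsM[OF M] set_bsM[OF M] by auto
qed

lemma rel2_TM:
  assumes M: "Mat M n" and ijk: "i < n" "j < n" "k < n" "i \<noteq> j" "i \<noteq> k" "j \<noteq> k"
  shows "rel2 (TM M n) i j k \<longleftrightarrow> {i,j} \<in> M"
  unfolding TM_def
  using rel2_T2[OF distinct_bsM[OF M] small_bsM, of i j k] set_bsM[OF M] ijk inblock_bsM[OF M, of i j]
  by auto

lemma tcost_TM:
  assumes M: "Mat M n" and ijk: "i < j" "j < k" "k < n"
    and w: "0 \<le> w i j" "0 \<le> w i k" "0 \<le> w j k"
  shows "tcost w (TM M n) i j k \<le>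
     (if {i,j} \<in> M then 0 else w i j) + (if {i,k} \<in> M then 0 else w i k) + (if {j,k} \<in> M then 0 else w j k)"
proof -
  have r1: "rel2 (TM M n) i j k \<longleftrightarrow> {i,j} \<in> M" using rel2_TM[OF M] ijk by auto
  have r2: "rel2 (TM M n) i k j \<longleftrightarrow> {i,k} \<in> M" using rel2_TM[OF M] ijk by auto
  have r3: "rel2 (TM M n) j k i \<longleftrightarrow> {j,k} \<in> M" using rel2_TM[OF M] ijk by auto
  have d: "{i,j} \<noteq> {i,k}" "{i,j} \<noteq> {j,k}" "{i,k} \<noteq> {j,k}" using ijk by (auto simp: doubleton_eq_iff)
  have disj: "\<And>e f. e \<in> M \<Longrightarrow> f \<in> M \<Longrightarrow> e \<noteq> f \<Longrightarrow> e \<inter> f = {}"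
    using M unfolding Mat_def by auto
  have m12: "\<not> ({i,j} \<in> M \<and> {i,k} \<in> M)"
  proof
    assume "{i,j} \<in> M \<and> {i,k} \<in> M"
    then show False using disj[of "{i,j}" "{i,k}"] d(1) by auto
  qed
  have m13: "\<not> ({i,j} \<in> M \<and> {j,k} \<in> M)"
  proof
    assume "{i,j} \<in> M \<and> {j,k} \<in> M"
    then show False using disj[of "{i,j}" "{j,k}"] d(2) by auto
  qed
  have m23: "\<not> ({i,k} \<in> M \<and> {j,k} \<in> M)"
  proof
    assume "{i,k} \<in> M \<and> {j,k} \<in> M"
    then show False using disj[of "{i,k}" "{j,k}"] d(3) by auto
  qed
  show ?thesis unfolding tcost_def r1 r2 r3 using m12 m13 m23 w by auto
qed

definition ws :: "(nat \<Rightarrow> nat \<Rightarrow> real) \<Rightarrow> nat set \<Rightarrow> real" where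
  "ws w e = w (Min e) (Max e)"

definition gtk :: "(nat \<Rightarrow> nat \<Rightarrow> real) \<Rightarrow> nat set \<Rightarrow> nat set \<Rightarrow> bool" where
  "gtk w e f \<longleftrightarrow> ws w f < ws w e \<or> (ws w f = ws w e \<and> (Min f < Min e \<or> (Min f = Min e \<and> Max f < Max e)))"

definition Mset :: "(nat \<Rightarrow> nat \<Rightarrow> real) \<Rightarrow> nat \<Rightarrow> nat set set" where
  "Mset w n = {e \<in> PS 2 {..<n}. \<forall>f \<in> PS 2 {..<n}. f \<noteq> e \<and> f \<inter> e \<noteq> {} \<longrightarrow> gtk w e f}"

lemma two_set: "card e = 2 \<Longrightarrow> e = {Min e, Max e}"
proof -
  assume "card e = 2"
  then obtain x y where e: "e = {x,y}" "x \<noteq> y" by (auto simp: card_2_iff)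
  then show ?thesis by (cases "x < y") (auto simp: min_def max_def)
qed

lemma gtk_asym: "gtk w e f \<Longrightarrow> \<not> gtk w f e"
  unfolding gtk_def by auto

lemma gtk_total:
  assumes e: "card e = 2" and f: "card f = 2" and ne: "e \<noteq> f" and n: "\<not> gtk w e f"
  shows "gtk w f e"
proof (rule ccontr)
  assume n2: "\<not> gtk w f e"
  then have "Min e = Min f" "Max e = Max f" using n unfolding gtk_def by auto
  then have "e = f" using two_set[OF e] two_set[OF f] by simp
  then show False using ne by simp
qed

lemma Mat_Mset: "Mat (Mset w n) n"
  unfolding Mat_def
proof (intro conjI ballI impI)
  show "Mset w n \<subseteq> PS 2 {..<n}" unfolding Mset_def by auto
  fix e f assume e: "e \<in> Mset w n" and f: "f \<in> Mset w n" and ne: "e \<noteq> f"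
  show "e \<inter> f = {}"
  proof (rule ccontr)
    assume i: "e \<inter> f \<noteq> {}"
    have fP: "f \<in> PS 2 {..<n}" and eP: "e \<in> PS 2 {..<n}" using e f unfolding Mset_def by auto
    have "\<forall>g \<in> PS 2 {..<n}. g \<noteq> e \<and> g \<inter> e \<noteq> {} \<longrightarrow> gtk w e g" using e unfolding Mset_def by auto
    then have g1: "gtk w e f" using fP ne i by (metis inf_commute)
    have "\<forall>g \<in> PS 2 {..<n}. g \<noteq> f \<and> g \<inter> f \<noteq> {} \<longrightarrow> gtk w f g" using f unfolding Mset_def by auto
    then have g2: "gtk w f e" using eP ne i by metis
    show False using gtk_asym[OF g1] g2 by simp
  qed
qed

lemma MinMax2[simp]: "a < b \<Longrightarrow> Min {a,b} = a" "a < (b::nat) \<Longrightarrow> Max {a,b} = b"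
  by auto

lemma ws2[simp]: "a < b \<Longrightarrow> ws w {a,b} = w a b"
  unfolding ws_def by simp

lemma gtk2: "a < b \<Longrightarrow> c < d \<Longrightarrow>
   gtk w {a,b} {c,d} \<longleftrightarrow> w c d < w a b \<or> (w c d = w a b \<and> (c < a \<or> (c = a \<and> d < b)))"
  unfolding gtk_def by simp

lemma PS2_triple:
  assumes "i < j" "j < k"
  shows "PS 2 {i,j,k} = {{i,j},{i,k},{j,k}}"
proof
  show "{{i,j},{i,k},{j,k}} \<subseteq> PS 2 {i,j,k}" using assms unfolding PS_def by auto
  show "PS 2 {i,j,k} \<subseteq> {{i,j},{i,k},{j,k}}"
  proof
    fix s assume "s \<in> PS 2 {i,j,k}"
    then have s: "s \<subseteq> {i,j,k}" "card s = 2" unfolding PS_def by auto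
    then obtain x y where xy: "s = {x,y}" "x \<noteq> y" by (auto simp: card_2_iff)
    then have "x \<in> {i,j,k}" "y \<in> {i,j,k}" using s by auto
    then show "s \<in> {{i,j},{i,k},{j,k}}" using xy by (auto simp: insert_commute)
  qed
qed

lemma sum_PS2_triple:
  assumes o: "i < j" "j < k"
  shows "(\<Sum>e\<in>PS 2 {i,j,k}. f e) = f {i,j} + f {i,k} + f {j,k}"
proof -
  have d: "{i,j} \<noteq> {i,k}" "{i,j} \<noteq> {j,k}" "{i,k} \<noteq> {j,k}" using o by (auto simp: doubleton_eq_iff)
  show ?thesis unfolding PS2_triple[OF o] using d by (simp add: add.assoc)
qed

lemma card_supsets:
  assumes V: "finite V" and e: "e \<in> PS 2 V"
  shows "card {s \<in> PS 3 V. e \<subseteq> s} = card V - 2"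
proof -
  have es: "e \<subseteq> V" "card e = 2" using e unfolding PS_def by auto
  have fe: "finite e" using es V finite_subset by auto
  have "{s \<in> PS 3 V. e \<subseteq> s} = (\<lambda>x. insert x e) ` (V - e)"
  proof
    show "(\<lambda>x. insert x e) ` (V - e) \<subseteq> {s \<in> PS 3 V. e \<subseteq> s}"
      using es fe unfolding PS_def by auto
    show "{s \<in> PS 3 V. e \<subseteq> s} \<subseteq> (\<lambda>x. insert x e) ` (V - e)"
    proof
      fix s assume s: "s \<in> {s \<in> PS 3 V. e \<subseteq> s}"
      then have sV: "s \<subseteq> V" "card s = 3" "e \<subseteq> s" unfolding PS_def by auto
      have fs: "finite s" using sV V finite_subset by auto
      have "card (s - e) = 1" using sV es fs fe by (simp add: card_Diff_subset)
      then obtain x where x: "s - e = {x}" by (auto simp: card_1_singleton_iff)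
      then have "s = insert x e" using sV by auto
      moreover have "x \<in> V - e" using x sV by auto
      ultimately show "s \<in> (\<lambda>x. insert x e) ` (V - e)" by auto
    qed
  qed
  moreover have "inj_on (\<lambda>x. insert x e) (V - e)"
    by (rule inj_onI) (auto simp: insert_ident)
  ultimately show ?thesis using es V fe by (simp add: card_image card_Diff_subset)
qed

lemma swap_PS:
  assumes V: "finite V"
  shows "(\<Sum>s\<in>PS 3 V. \<Sum>e\<in>PS 2 s. g e s) = (\<Sum>e\<in>PS 2 V. \<Sum>s\<in>{s \<in> PS 3 V. e \<subseteq> s}. g e s)"
proof -
  have "(\<Sum>s\<in>PS 3 V. \<Sum>e\<in>PS 2 s. g e s) = (\<Sum>s\<in>PS 3 V. \<Sum>e\<in>{e. e \<in> PS 2 V \<and> e \<subseteq> s}. g e s)"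
  proof (rule sum.cong)
    fix s assume "s \<in> PS 3 V"
    then have "PS 2 s = {e. e \<in> PS 2 V \<and> e \<subseteq> s}" unfolding PS_def by auto
    then show "(\<Sum>e\<in>PS 2 s. g e s) = (\<Sum>e\<in>{e. e \<in> PS 2 V \<and> e \<subseteq> s}. g e s)" by simp
  qed simp
  also have "\<dots> = (\<Sum>e\<in>PS 2 V. \<Sum>s\<in>{s. s \<in> PS 3 V \<and> e \<subseteq> s}. g e s)"
    by (rule sum.swap_restrict) (use V in auto)
  finally show ?thesis by simp
qed

lemma card_union_2:
  assumes e: "finite e" "card e = 2" and f: "finite f" "card f = 2" and ne: "e \<noteq> f" and i: "e \<inter> f \<noteq> {}"
  shows "card (e \<union> f) = 3"
proof -
  have "e \<inter> f \<noteq> e"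
  proof
    assume "e \<inter> f = e"
    then have "e \<subseteq> f" by auto
    then have "e = f" using card_subset_eq[OF f(1)] e f by simp
    then show False using ne by simp
  qed
  then have "e \<inter> f \<subset> e" by auto
  then have "card (e \<inter> f) < 2" using psubset_card_mono[OF e(1)] e by simp
  moreover have "card (e \<inter> f) > 0" using i e by (simp add: card_gt_0_iff)
  ultimately have "card (e \<inter> f) = 1" by simp
  then show ?thesis using card_Un_Int[OF e(1) f(1)] e f by simp
qed

lemma part1_upper:
  assumes n: "n \<ge> 3" and w: "\<forall>i<n. \<forall>j<n. w i j = w j i \<and> w i j \<ge> 0"
  shows "rho_star n w \<le> ereal (real n - 2)"
proof -
  let ?V = "{..<n}"
  define M where "M = Mset w n"
  define h where "h e = (if e \<in> M then 0 else ws w e)" for e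
  define q where "q e s = (if (\<exists>f\<in>PS 2 s. gtk w f e) then ws w e else 0)" for e s
  define T where "T = TM M n"
  have Mat: "Mat M n" unfolding M_def by (rule Mat_Mset)
  have hc: "hc_tree n T" unfolding T_def using hc_TM[OF Mat] n by simp
  have wn: "\<forall>i<n. \<forall>j<n. w i j \<ge> 0" using w by auto
  have wsnn: "0 \<le> ws w e" if "e \<in> PS 2 ?V" for e
  proof -
    have "e \<subseteq> ?V" "card e = 2" using that unfolding PS_def by auto
    moreover have "finite e" "e \<noteq> {}" using \<open>card e = 2\<close> by (auto intro: card_ge_0_finite)
    ultimately have "Min e \<in> ?V" "Max e \<in> ?V" using Min_in Max_in by blast+
    then have "Min e < n" "Max e < n" by auto
    then show ?thesis unfolding ws_def using wn by auto
  qed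
  have "TC n w T = (\<Sum>(i,j,k)\<in>tripsV ?V. tcost w T i j k)" unfolding TC_def triples_tripsV ..
  also have "\<dots> \<le> (\<Sum>(i,j,k)\<in>tripsV ?V. \<Sum>e\<in>PS 2 {i,j,k}. h e)"
  proof (rule sum_mono)
    fix t assume t: "t \<in> tripsV ?V"
    obtain i j k where [simp]: "t = (i,j,k)" by (cases t) auto
    have o: "i < j" "j < k" "k < n" using t unfolding tripsV_def by auto
    have "tcost w T i j k \<le> h {i,j} + h {i,k} + h {j,k}"
    proof -
      have nn: "0 \<le> w i j" "0 \<le> w i k" "0 \<le> w j k" using wn o by auto
      have eqs: "h {i,j} = (if {i,j} \<in> M then 0 else w i j)" "h {i,k} = (if {i,k} \<in> M then 0 else w i k)"
        "h {j,k} = (if {j,k} \<in> M then 0 else w j k)" using o unfolding h_def by simp_all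
      show ?thesis unfolding T_def eqs by (rule tcost_TM[OF Mat o nn])
    qed
    then show "(case t of (i,j,k) \<Rightarrow> tcost w T i j k) \<le> (case t of (i,j,k) \<Rightarrow> \<Sum>e\<in>PS 2 {i,j,k}. h e)"
      using sum_PS2_triple[OF o(1,2), of h] by simp
  qed
  also have "\<dots> = (\<Sum>s\<in>PS 3 ?V. \<Sum>e\<in>PS 2 s. h e)" by (rule sum_trips)
  also have "\<dots> = (\<Sum>e\<in>PS 2 ?V. \<Sum>s\<in>{s \<in> PS 3 ?V. e \<subseteq> s}. h e)" by (rule swap_PS) simp
  also have "\<dots> = (\<Sum>e\<in>PS 2 ?V. (real n - 2) * h e)"
  proof (rule sum.cong)
    fix e assume e: "e \<in> PS 2 ?V"
    have "card {s \<in> PS 3 ?V. e \<subseteq> s} = n - 2" using card_supsets[of ?V e] e by simp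
    then show "(\<Sum>s\<in>{s \<in> PS 3 ?V. e \<subseteq> s}. h e) = (real n - 2) * h e" using n by (simp add: of_nat_diff)
  qed simp
  finally have TCle: "TC n w T \<le> (real n - 2) * (\<Sum>e\<in>PS 2 ?V. h e)" by (simp add: sum_distrib_left)
  have "BC n w = (\<Sum>(i,j,k)\<in>tripsV ?V. min (w i j + w i k) (min (w i j + w j k) (w i k + w j k)))"
    unfolding BC_def triples_tripsV ..
  also have "\<dots> = (\<Sum>(i,j,k)\<in>tripsV ?V. \<Sum>e\<in>PS 2 {i,j,k}. q e {i,j,k})"
  proof (rule sum.cong)
    fix t assume t: "t \<in> tripsV ?V"
    obtain i j k where [simp]: "t = (i,j,k)" by (cases t) auto
    have o: "i < j" "j < k" "k < n" using t unfolding tripsV_def by auto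
    have ex: "(\<exists>f\<in>PS 2 {i,j,k}. gtk w f e) \<longleftrightarrow> gtk w {i,j} e \<or> gtk w {i,k} e \<or> gtk w {j,k} e" for e
      unfolding PS2_triple[OF o(1,2)] by simp
    have "min (w i j + w i k) (min (w i j + w j k) (w i k + w j k)) = q {i,j} {i,j,k} + q {i,k} {i,j,k} + q {j,k} {i,j,k}"
      unfolding q_def ex using o by (auto simp: gtk2)
    then show "(case t of (i,j,k) \<Rightarrow> min (w i j + w i k) (min (w i j + w j k) (w i k + w j k)))
        = (case t of (i,j,k) \<Rightarrow> \<Sum>e\<in>PS 2 {i,j,k}. q e {i,j,k})"
      using sum_PS2_triple[OF o(1,2), of "\<lambda>e. q e {i,j,k}"] by simp
  qed simp
  also have "\<dots> = (\<Sum>s\<in>PS 3 ?V. \<Sum>e\<in>PS 2 s. q e s)" by (rule sum_trips[of "\<lambda>s. \<Sum>e\<in>PS 2 s. q e s"])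
  also have "\<dots> = (\<Sum>e\<in>PS 2 ?V. \<Sum>s\<in>{s \<in> PS 3 ?V. e \<subseteq> s}. q e s)" by (rule swap_PS) simp
  finally have BCeq: "BC n w = (\<Sum>e\<in>PS 2 ?V. \<Sum>s\<in>{s \<in> PS 3 ?V. e \<subseteq> s}. q e s)" .
  have "(\<Sum>e\<in>PS 2 ?V. h e) \<le> (\<Sum>e\<in>PS 2 ?V. \<Sum>s\<in>{s \<in> PS 3 ?V. e \<subseteq> s}. q e s)"
  proof (rule sum_mono)
    fix e assume e: "e \<in> PS 2 ?V"
    have qnn: "\<forall>s\<in>{s \<in> PS 3 ?V. e \<subseteq> s}. 0 \<le> q e s" unfolding q_def using wsnn[OF e] by auto
    show "h e \<le> (\<Sum>s\<in>{s \<in> PS 3 ?V. e \<subseteq> s}. q e s)"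
    proof (cases "e \<in> M")
      case True
      have "0 \<le> (\<Sum>s\<in>{s \<in> PS 3 ?V. e \<subseteq> s}. q e s)" by (rule sum_nonneg) (use qnn in auto)
      then show ?thesis unfolding h_def using True by simp
    next
      case False
      then obtain f where f: "f \<in> PS 2 ?V" "f \<noteq> e" "f \<inter> e \<noteq> {}" "\<not> gtk w e f"
        using e unfolding M_def Mset_def by auto
      have ce: "card e = 2" "e \<subseteq> ?V" and cf: "card f = 2" "f \<subseteq> ?V" using e f(1) unfolding PS_def by auto
      have fe: "finite e" "finite f" using ce cf by (auto intro: card_ge_0_finite)
      have g: "gtk w f e" using gtk_total[OF ce(1) cf(1)] f by auto
      define s0 where "s0 = e \<union> f"
      have "card s0 = 3" unfolding s0_def
        by (rule card_union_2) (use fe ce cf f in auto)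
      then have s0: "s0 \<in> {s \<in> PS 3 ?V. e \<subseteq> s}" using ce cf unfolding PS_def s0_def by auto
      have "f \<in> PS 2 s0" using cf unfolding PS_def s0_def by auto
      then have "q e s0 = ws w e" unfolding q_def using g by auto
      moreover have "q e s0 \<le> (\<Sum>s\<in>{s \<in> PS 3 ?V. e \<subseteq> s}. q e s)"
        by (rule member_le_sum[OF s0]) (use qnn in auto)
      ultimately show ?thesis unfolding h_def using False by simp
    qed
  qed
  then have hBC: "(\<Sum>e\<in>PS 2 ?V. h e) \<le> BC n w" using BCeq by simp
  have "TC n w T \<le> (real n - 2) * BC n w"
  proof -
    have "(real n - 2) * (\<Sum>e\<in>PS 2 ?V. h e) \<le> (real n - 2) * BC n w"
      by (rule mult_left_mono[OF hBC]) (use n in simp)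
    then show ?thesis using TCle by linarith
  qed
  then show ?thesis using rho_le[OF hc wn, of "real n - 2"] n by simp
qed

theorem theorem1:
  shows "(\<forall>(n::nat) (w::nat \<Rightarrow> nat \<Rightarrow> real).
            n \<ge> 3 \<and> (\<forall>i<n. \<forall>j<n. w i j = w j i \<and> w i j \<ge> 0) \<longrightarrow>
            1 \<le> rho_star n w \<and> rho_star n w \<le> ereal (real n - 2))
       \<and> (\<forall>(n::nat) (E::nat set set).
            n \<ge> 3 \<and> simple_graph n E \<and> connected_graph n E \<longrightarrow>
            1 \<le> rho_star n (unw E) \<and>
            rho_star n (unw E) \<le>
              ereal ((real n ^ 2 - 2 * real n) / (2 * real (card E) - real n)))"
proof (rule conjI)
  show "\<forall>(n::nat) (w::nat \<Rightarrow> nat \<Rightarrow> real).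
            n \<ge> 3 \<and> (\<forall>i<n. \<forall>j<n. w i j = w j i \<and> w i j \<ge> 0) \<longrightarrow>
            1 \<le> rho_star n w \<and> rho_star n w \<le> ereal (real n - 2)"
  proof (intro allI impI)
    fix n :: nat and w :: "nat \<Rightarrow> nat \<Rightarrow> real"
    assume a: "n \<ge> 3 \<and> (\<forall>i<n. \<forall>j<n. w i j = w j i \<and> w i j \<ge> 0)"
    then have wn: "\<forall>i<n. \<forall>j<n. w i j \<ge> 0" by auto
    show "1 \<le> rho_star n w \<and> rho_star n w \<le> ereal (real n - 2)"
      using rho_ge1[OF wn] part1_upper[of n w] a by auto
  qed
  show "\<forall>(n::nat) (E::nat set set).
            n \<ge> 3 \<and> simple_graph n E \<and> connected_graph n E \<longrightarrow>
            1 \<le> rho_star n (unw E) \<and>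
            rho_star n (unw E) \<le>
              ereal ((real n ^ 2 - 2 * real n) / (2 * real (card E) - real n))"
  proof (intro allI impI)
    fix n :: nat and E :: "nat set set"
    assume a: "n \<ge> 3 \<and> simple_graph n E \<and> connected_graph n E"
    have wn: "\<forall>i<n. \<forall>j<n. unw E i j \<ge> 0" using unw_nonneg by auto
    show "1 \<le> rho_star n (unw E) \<and>
            rho_star n (unw E) \<le>
              ereal ((real n ^ 2 - 2 * real n) / (2 * real (card E) - real n))"
      using rho_ge1[OF wn] part2[of n E] a by auto
  qed
qed

end
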